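(* Let $G=\mathfrak{S}_3$ with identity $id$. Let $(\mu_t)_{t\ge0}$ (resp. $(\eta_t)_{t\ge0}$) be the continuous convolution semigroup of probability measures on $G$ starting from $\delta_{id}$ associated with the jump measure $m$ (resp. $m_0$), where $m((12))=0,\ m((13))=1,\ m((23))=2,\ m((123))=2,\ m((132))=0$, and $m_0((12))=m_0((13))=m_0((23))=m_0((123))=m_0((132))=1$ (both measures vanish at $id$). Then $\mu_1$ is quasi-invariant by conjugation, and for every $n\in\mathbb{N}$, $\int_G(\mu_1^g)^{*n}\,dg=\eta_1^{*n}$.
   Context: The convolution semigroup with jump measure $m$ is the family of laws of the compound Poisson process with jump measure $m$: $\mu_t=e^{-t\,m(G)}\sum_{k\ge0}\frac{t^k}{k!}m^{*k}$ (with $m^{*0}=\delta_{id}$). For $g\in G$, $\mu^g$ is the image of $\mu$ under $x\mapsto g^{-1}xg$; $dg$ is the uniform probability measure on $G$. A probability measure $\mu$ is quasi-invariant by conjugation if there exists a probability measure $\nu$ with $\int_G(\mu^g)^{*n}dg=\nu^{*n}$ for all $n\in\mathbb{N}$. *)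

theory Defs
  imports "HOL-Analysis.Analysis" "HOL-Combinatorics.Perm"
begin

text \<open>The symmetric group S_3, realised as the permutations of nat moving only 1, 2, 3.
  The product is composition: (p * q) applied to a is p applied to (q applied to a).\<close>
definition S3 :: "nat perm set" where
  "S3 = {p. affected p \<subseteq> {1, 2, 3}}"

type_synonym meas = "nat perm \<Rightarrow> real"

definition delta_id :: meas where
  "delta_id = (\<lambda>z. if z = 1 then 1 else 0)"

definition conv :: "meas \<Rightarrow> meas \<Rightarrow> meas" where
  "conv mu nu = (\<lambda>z. \<Sum>x\<in>S3. \<Sum>y\<in>S3. if x * y = z then mu x * nu y else 0)"

definition conv_pow :: "meas \<Rightarrow> nat \<Rightarrow> meas" where
  "conv_pow mu n = (conv mu ^^ n) delta_id"

text \<open>Compound Poisson law at time t with jump measure m: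
  mu_t = exp(-t m(G)) * sum_k t^k/k! m^{*k}.\<close>
definition cpp :: "meas \<Rightarrow> real \<Rightarrow> meas" where
  "cpp m t = (\<lambda>z. exp (- t * sum m S3) * (\<Sum>k. t ^ k / fact k * conv_pow m k z))"

definition conj_img :: "meas \<Rightarrow> nat perm \<Rightarrow> meas" where
  "conj_img mu g = (\<lambda>y. \<Sum>x\<in>S3. if inverse g * x * g = y then mu x else 0)"

definition avg_conj :: "meas \<Rightarrow> nat \<Rightarrow> meas" where
  "avg_conj mu n = (\<lambda>y. (\<Sum>g\<in>S3. conv_pow (conj_img mu g) n y) / real (card S3))"

definition prob_meas :: "meas \<Rightarrow> bool" where
  "prob_meas nu \<longleftrightarrow> (\<forall>x. 0 \<le> nu x) \<and> (\<forall>x. x \<notin> S3 \<longrightarrow> nu x = 0) \<and> sum nu S3 = 1"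

definition quasi_invariant :: "meas \<Rightarrow> bool" where
  "quasi_invariant mu \<longleftrightarrow> (\<exists>nu. prob_meas nu \<and> (\<forall>n. avg_conj mu n = conv_pow nu n))"

text \<open>Jump measures. Perm.cycle [1,2,3] is the 3-cycle (123): 1->2->3->1.\<close>
definition jm :: meas where
  "jm = (\<lambda>x. if x = Perm.swap 1 3 then 1
             else if x = Perm.swap 2 3 then 2
             else if x = Perm.cycle [1, 2, 3] then 2
             else 0)"

definition jm0 :: meas where
  "jm0 = (\<lambda>x. if x \<in> S3 \<and> x \<noteq> 1 then 1 else 0)"

end

theory Submission imports Defs begin

declare One_nat_def[simp del]
definition "t12 = Perm.swap (1::nat) 2"
definition "t13 = Perm.swap (1::nat) 3"
definition "t23 = Perm.swap (2::nat) 3"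
definition "c123 = Perm.cycle [1::nat,2,3]"
definition "c132 = Perm.cycle [1::nat,3,2]"

lemma S3_eq_iff:
  assumes "p \<in> S3" "q \<in> S3"
  shows "p = q \<longleftrightarrow> Perm.apply p 1 = Perm.apply q 1 \<and> Perm.apply p 2 = Perm.apply q 2 \<and> Perm.apply p 3 = Perm.apply q 3"
proof
  assume h: "Perm.apply p 1 = Perm.apply q 1 \<and> Perm.apply p 2 = Perm.apply q 2 \<and> Perm.apply p 3 = Perm.apply q 3"
  show "p = q"
  proof (rule perm_eqI)
    fix a
    show "Perm.apply p a = Perm.apply q a"
    proof (cases "a \<in> {1,2,3}")
      case True then show ?thesis using h by auto
    next
      case False
      then have "a \<notin> affected p" "a \<notin> affected q" using assms unfolding S3_def by auto
      then show ?thesis by (simp add: in_affected)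
    qed
  qed
qed simp

lemma S3_times: "p \<in> S3 \<Longrightarrow> q \<in> S3 \<Longrightarrow> p * q \<in> S3"
  unfolding S3_def using affected_times[of p q] by blast

lemma S3_inverse: "p \<in> S3 \<Longrightarrow> inverse p \<in> S3"
  unfolding S3_def by simp

lemma S3_one: "1 \<in> S3" unfolding S3_def by simp

lemma swap_S3: "a \<in> {1,2,3} \<Longrightarrow> b \<in> {1,2,3} \<Longrightarrow> Perm.swap a b \<in> S3"
  unfolding S3_def by (cases "a = b") (auto simp: affected_swap)

lemma six_in_S3: "t12 \<in> S3" "t13 \<in> S3" "t23 \<in> S3" "c123 \<in> S3" "c132 \<in> S3"
  unfolding t12_def t13_def t23_def c123_def c132_def by (auto intro!: S3_times swap_S3)

lemma apply_times': "Perm.apply (p * q) a = Perm.apply p (Perm.apply q a)"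
  by (simp add: apply_times)

lemma apply_c123: "Perm.apply c123 1 = 2" "Perm.apply c123 2 = 3" "Perm.apply c123 3 = 1"
  by (simp_all add: apply_times' c123_def)
lemma apply_c132: "Perm.apply c132 1 = 3" "Perm.apply c132 3 = 2" "Perm.apply c132 2 = 1"
  by (simp_all add: apply_times' c132_def)
lemma apply_sw: "Perm.apply t12 3 = 3" "Perm.apply t13 2 = 2" "Perm.apply t23 (1::nat) = 1"
  "Perm.apply t12 1 = 2" "Perm.apply t12 2 = 1" "Perm.apply t13 1 = 3" "Perm.apply t13 3 = 1"
  "Perm.apply t23 2 = 3" "Perm.apply t23 3 = 2"
  by (simp_all add: t12_def t13_def t23_def)

declare cycle.simps[simp del]
lemmas psimps = apply_c123 apply_c132 apply_sw apply_times' S3_times S3_one six_in_S3 S3_inverse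


lemma S3_range: assumes "p \<in> S3" "a \<in> {1,2,3::nat}" shows "Perm.apply p a \<in> {1,2,3}"
proof (cases "a \<in> affected p")
  case True
  then show ?thesis using apply_affected[of p a] assms unfolding S3_def by blast
next
  case False then show ?thesis using assms by (simp add: in_affected)
qed

lemma S3_cases: assumes "p \<in> S3" shows "p = 1 \<or> p = t12 \<or> p = t13 \<or> p = t23 \<or> p = c123 \<or> p = c132"
proof -
  have r: "Perm.apply p 1 \<in> {1,2,3}" "Perm.apply p 2 \<in> {1,2,3}" "Perm.apply p 3 \<in> {1,2,3}"
    using S3_range[OF assms] by auto
  have d: "Perm.apply p 1 \<noteq> Perm.apply p 2" "Perm.apply p 1 \<noteq> Perm.apply p 3" "Perm.apply p 2 \<noteq> Perm.apply p 3"
    by (simp_all add: apply_inj)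
  have e: "\<And>q. q \<in> S3 \<Longrightarrow> Perm.apply p 1 = Perm.apply q 1 \<Longrightarrow> Perm.apply p 2 = Perm.apply q 2 \<Longrightarrow> Perm.apply p 3 = Perm.apply q 3 \<Longrightarrow> p = q"
    using S3_eq_iff[OF assms] by blast
  consider "Perm.apply p 1 = 1" "Perm.apply p 2 = 2" "Perm.apply p 3 = 3"
    | "Perm.apply p 1 = 2" "Perm.apply p 2 = 1" "Perm.apply p 3 = 3"
    | "Perm.apply p 1 = 3" "Perm.apply p 2 = 2" "Perm.apply p 3 = 1"
    | "Perm.apply p 1 = 1" "Perm.apply p 2 = 3" "Perm.apply p 3 = 2"
    | "Perm.apply p 1 = 2" "Perm.apply p 2 = 3" "Perm.apply p 3 = 1"
    | "Perm.apply p 1 = 3" "Perm.apply p 2 = 1" "Perm.apply p 3 = 2"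
    using r d by auto
  then show ?thesis
  proof cases
    case 1 then show ?thesis using e[OF S3_one] by simp
  next
    case 2 then show ?thesis using e[OF six_in_S3(1)] by (simp add: apply_sw)
  next
    case 3 then show ?thesis using e[OF six_in_S3(2)] by (simp add: apply_sw)
  next
    case 4 then show ?thesis using e[OF six_in_S3(3)] by (simp add: apply_sw)
  next
    case 5 then show ?thesis using e[OF six_in_S3(4)] by (simp add: apply_c123)
  next
    case 6 then show ?thesis using e[OF six_in_S3(5)] by (simp add: apply_c132)
  qed
qed

lemma S3_explicit: "S3 = {1, t12, t13, t23, c123, c132}"
  using S3_cases S3_one six_in_S3 by auto

lemma distinct6: "distinct [1, t12, t13, t23, c123, c132]"
  by (simp add: S3_eq_iff psimps)

lemma sum_S3: "sum f S3 = f 1 + f t12 + f t13 + f t23 + f c123 + f c132"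
  unfolding S3_explicit using distinct6 by (simp add: add.assoc)

lemma finite_S3[simp]: "finite S3" unfolding S3_explicit by simp

lemma card_S3: "card S3 = 6"
  unfolding S3_explicit using distinct6 by (simp add: add.assoc)

lemma inv_six: "inverse t12 = t12" "inverse t13 = t13" "inverse t23 = t23"
  "inverse c123 = c132" "inverse c132 = c123"
proof -
  show "inverse t12 = t12" "inverse t13 = t13" "inverse t23 = t23"
    by (simp_all add: t12_def t13_def t23_def)
  have "c123 * c132 = 1" by (simp add: S3_eq_iff psimps)
  then show "inverse c123 = c132" "inverse c132 = c123"
    by (metis perm.inverse_unique perm.inverse_inverse)+
qed

lemma mul_eq_iff: "(x::nat perm) * y = z \<longleftrightarrow> y = inverse x * z"
  by (metis mult.assoc perm.left_inverse perm.right_inverse mult_1_left)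

lemma conj_eq_iff: "inverse (g::nat perm) * x * g = y \<longleftrightarrow> x = g * y * inverse g"
  by (metis mult.assoc perm.left_inverse perm.right_inverse mult_1_left mult_1_right)

definition dl :: meas where "dl = delta_id"
definition Cm :: meas where "Cm = (\<lambda>z. if z \<in> S3 then 1 else 0)"
definition supp :: "meas \<Rightarrow> bool" where "supp f \<longleftrightarrow> (\<forall>z. z \<notin> S3 \<longrightarrow> f z = 0)"
definition Lc :: "real \<Rightarrow> real \<Rightarrow> real \<Rightarrow> meas \<Rightarrow> meas" where
  "Lc a b c w = (\<lambda>z. a * dl z + b * Cm z + c * w z)"

lemma conv_out: "z \<notin> S3 \<Longrightarrow> conv f g z = 0"
  unfolding conv_def by (auto intro!: sum.neutral simp: S3_times)

lemma conv_in: assumes "z \<in> S3" shows "conv f g z = (\<Sum>x\<in>S3. f x * g (inverse x * z))"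
  unfolding conv_def
proof (rule sum.cong[OF refl])
  fix x assume x: "x \<in> S3"
  have "(\<Sum>y\<in>S3. if x * y = z then f x * g y else 0) = (\<Sum>y\<in>S3. if y = inverse x * z then f x * g y else 0)"
    by (simp add: mul_eq_iff)
  also have "\<dots> = f x * g (inverse x * z)"
    using x assms by (simp add: S3_times S3_inverse)
  finally show "(\<Sum>y\<in>S3. if x * y = z then f x * g y else 0) = f x * g (inverse x * z)" .
qed

lemma conv_in2: assumes "z \<in> S3" shows "conv f g z = (\<Sum>y\<in>S3. f (z * inverse y) * g y)"
proof -
  have "conv f g z = (\<Sum>y\<in>S3. \<Sum>x\<in>S3. if x * y = z then f x * g y else 0)"
    unfolding conv_def by (rule sum.swap)
  also have "\<dots> = (\<Sum>y\<in>S3. f (z * inverse y) * g y)"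
  proof (rule sum.cong[OF refl])
    fix y assume y: "y \<in> S3"
    have e: "x * y = z \<longleftrightarrow> x = z * inverse y" for x :: "nat perm"
      by (metis mult.assoc perm.left_inverse perm.right_inverse mult_1_right)
    show "(\<Sum>x\<in>S3. if x * y = z then f x * g y else 0) = f (z * inverse y) * g y"
      using y assms by (simp add: e S3_times S3_inverse)
  qed
  finally show ?thesis .
qed

lemma ifmul: "(if P then 1 else 0) * (b::real) = (if P then b else 0)" "b * (if P then 1 else 0) = (if P then b else 0)"
  by auto

lemma conv_dl_l: "conv dl g z = (if z \<in> S3 then g z else 0)"
  by (auto simp: conv_out conv_in dl_def delta_id_def ifmul S3_one)

lemma conv_dl_r: "conv f dl z = (if z \<in> S3 then f z else 0)"
  by (auto simp: conv_out conv_in2 dl_def delta_id_def ifmul S3_one)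

lemma conv_C_r: "conv f Cm z = (if z \<in> S3 then sum f S3 else 0)"
  by (auto simp: conv_out conv_in Cm_def ifmul S3_times S3_inverse intro!: sum.cong)

lemma conv_C_l: "conv Cm g z = (if z \<in> S3 then sum g S3 else 0)"
  by (auto simp: conv_out conv_in2 Cm_def ifmul S3_times S3_inverse intro!: sum.cong)

lemma conv_Lc_l: "conv (Lc a b c w) h z = a * conv dl h z + b * conv Cm h z + c * conv w h z"
proof -
  have e: "(if x * y = z then (a * dl x + b * Cm x + c * w x) * h y else 0) =
    a * (if x * y = z then dl x * h y else 0) + b * (if x * y = z then Cm x * h y else 0)
    + c * (if x * y = z then w x * h y else 0)" for x y
    by (simp add: algebra_simps)
  show ?thesis unfolding conv_def Lc_def e
    by (simp add: sum.distrib sum_distrib_left)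
qed

lemma conv_Lc_r: "conv h (Lc a b c w) z = a * conv h dl z + b * conv h Cm z + c * conv h w z"
proof -
  have e: "(if x * y = z then h x * (a * dl y + b * Cm y + c * w y) else 0) =
    a * (if x * y = z then h x * dl y else 0) + b * (if x * y = z then h x * Cm y else 0)
    + c * (if x * y = z then h x * w y else 0)" for x y
    by (simp add: algebra_simps)
  show ?thesis unfolding conv_def Lc_def e
    by (simp add: sum.distrib sum_distrib_left)
qed

lemma sum_dl: "sum dl S3 = 1" by (simp add: dl_def delta_id_def S3_one)
lemma sum_Cm: "sum Cm S3 = 6" by (simp add: Cm_def card_S3)
lemma dl_out: "z \<notin> S3 \<Longrightarrow> dl z = 0" by (auto simp: dl_def delta_id_def S3_one)
lemma Cm_out: "z \<notin> S3 \<Longrightarrow> Cm z = 0" by (auto simp: Cm_def)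
lemma Cm_in: "z \<in> S3 \<Longrightarrow> Cm z = 1" by (auto simp: Cm_def)

lemma sum_Lc: "sum (Lc a b c w) S3 = a + 6 * b + c * sum w S3"
  unfolding Lc_def by (simp add: sum.distrib sum_distrib_left[symmetric] sum_dl sum_Cm del: sum_distrib_left)

lemma conv_Lc:
  assumes "supp w" "sum w S3 = 0" "\<And>z. conv w w z = 0"
  shows "conv (Lc a1 b1 c1 w) (Lc a2 b2 c2 w) = Lc (a1*a2) (a1*b2+b1*a2+6*b1*b2) (a1*c2+c1*a2) w"
proof (rule ext)
  fix z
  show "conv (Lc a1 b1 c1 w) (Lc a2 b2 c2 w) z = Lc (a1*a2) (a1*b2+b1*a2+6*b1*b2) (a1*c2+c1*a2) w z"
  proof (cases "z \<in> S3")
    case True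
    then show ?thesis
      by (simp add: conv_Lc_l conv_Lc_r conv_dl_l conv_dl_r conv_C_l conv_C_r sum_dl sum_Cm sum_Lc assms Cm_in)
         (simp add: Lc_def Cm_in True algebra_simps)
  next
    case False
    then show ?thesis using assms(1) by (simp add: conv_out Lc_def dl_out Cm_out supp_def)
  qed
qed

lemma conv_pow_Suc: "conv_pow mu (Suc n) = conv mu (conv_pow mu n)"
  by (simp add: conv_pow_def)

lemma conv_pow_Lc:
  assumes "supp w" "sum w S3 = 0" "\<And>z. conv w w z = 0"
  shows "conv_pow (Lc a b c w) n = Lc (a^n) (((a+6*b)^n - a^n)/6) (real n*a^(n-1)*c) w"
proof (induction n)
  case 0
  then show ?case by (simp add: conv_pow_def Lc_def dl_def)
next
  case (Suc n)
  have e1: "a * (((a+6*b)^n - a^n)/6) + b * a^n + 6 * b * (((a+6*b)^n - a^n)/6) = ((a+6*b)^Suc n - a^Suc n)/6"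
    by (simp add: field_simps)
  have e2: "a * (real n*a^(n-1)*c) + c * a^n = real (Suc n) * a^(Suc n - 1) * c"
    by (cases n) (simp_all add: algebra_simps)
  have "conv_pow (Lc a b c w) (Suc n) = Lc (a*a^n) (a * (((a+6*b)^n - a^n)/6) + b * a^n + 6 * b * (((a+6*b)^n - a^n)/6))
     (a * (real n*a^(n-1)*c) + c * a^n) w"
    by (simp only: conv_pow_Suc Suc.IH conv_Lc[OF assms] mult_1_right mult_1_left)
  also have "\<dots> = Lc (a^Suc n) (((a+6*b)^Suc n - a^Suc n)/6) (real (Suc n)*a^(Suc n-1)*c) w"
    unfolding e1 e2 by simp
  finally show ?case .
qed

lemma exp_sums: "(\<lambda>k. x ^ k / fact k) sums exp (x::real)"
  using exp_converges[of x] by (simp add: divide_inverse mult.commute)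

lemma exp_sums2: "(\<lambda>k. real k * (-1) ^ (k - 1) / fact k) sums exp (-1::real)"
proof -
  have "(\<lambda>k. real (Suc k) * (-1) ^ (Suc k - 1) / fact (Suc k)) = (\<lambda>k. (-1::real) ^ k / fact k)"
    by (rule ext) (simp add: fact_Suc del: of_nat_Suc)
  then have "(\<lambda>k. real (Suc k) * (-1) ^ (Suc k - 1) / fact (Suc k)) sums exp (-1::real)"
    using exp_sums[of "-1"] by simp
  then show ?thesis by (subst (asm) sums_Suc_iff) simp
qed

definition alpha :: real where "alpha = exp (-6)"
definition beta :: real where "beta = (1 - exp (-6)) / 6"

lemma cpp_Lc:
  assumes "supp w" "sum w S3 = 0" "\<And>z. conv w w z = 0"
  shows "cpp (Lc (-1) 1 c w) 1 = Lc alpha beta (c * alpha) w"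
proof (rule ext)
  fix z
  have pw: "conv_pow (Lc (-1) 1 c w) k z = (-1)^k * dl z + (5^k - (-1)^k)/6 * Cm z + real k * (-1)^(k-1) * c * w z" for k
    by (simp only: conv_pow_Lc[OF assms]) (simp add: Lc_def)
  have "(\<lambda>k. dl z * ((-1)^k / fact k) + Cm z / 6 * (5^k / fact k) - Cm z / 6 * ((-1)^k / fact k)
          + c * w z * (real k * (-1) ^ (k - 1) / fact k))
       sums (dl z * exp (-1) + Cm z / 6 * exp 5 - Cm z / 6 * exp (-1) + c * w z * exp (-1))"
    by (intro sums_add sums_diff sums_mult exp_sums exp_sums2)
  moreover have "(\<lambda>k. dl z * ((-1)^k / fact k) + Cm z / 6 * (5^k / fact k) - Cm z / 6 * ((-1)^k / fact k)
          + c * w z * (real k * (-1) ^ (k - 1) / fact k)) = (\<lambda>k. 1 ^ k / fact k * conv_pow (Lc (-1) 1 c w) k z)"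
    by (rule ext) (simp add: pw field_simps)
  ultimately have s: "(\<Sum>k. 1 ^ k / fact k * conv_pow (Lc (-1) 1 c w) k z) = dl z * exp (-1) + Cm z / 6 * exp 5 - Cm z / 6 * exp (-1) + c * w z * exp (-1)"
    by (simp add: sums_iff)
  have m: "sum (Lc (-1) 1 c w) S3 = 5" using assms by (simp add: sum_Lc)
  have e: "exp (-5) * exp (-1) = exp (-6::real)" "exp (-5) * exp 5 = (1::real)"
    by (simp_all add: exp_add[symmetric])
  have "cpp (Lc (-1) 1 c w) 1 z = exp (-5) * (dl z * exp (-1) + Cm z / 6 * exp 5 - Cm z / 6 * exp (-1) + c * w z * exp (-1))"
    unfolding cpp_def s m by simp
  also have "\<dots> = dl z*(exp(-5)*exp(-1)) + Cm z/6*(exp(-5)*exp 5) - Cm z/6*(exp(-5)*exp(-1)) + c*w z*(exp(-5)*exp(-1))"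
    by (simp add: algebra_simps)
  also have "\<dots> = Lc alpha beta (c * alpha) w z"
    unfolding e by (simp add: Lc_def alpha_def beta_def algebra_simps diff_divide_distrib)
  finally show "cpp (Lc (-1) 1 c w) 1 z = Lc alpha beta (c * alpha) w z" .
qed

lemma inv_cancel: "inverse x * (x * y) = (y::nat perm)" "x * (inverse x * y) = (y::nat perm)"
  by (metis mult.assoc perm.left_inverse mult_1_left, metis mult.assoc perm.right_inverse mult_1_left)

lemmas grp = mult.assoc perm.left_inverse perm.right_inverse inv_cancel perm.inverse_inverse

lemma conj_formula:
  assumes g: "g \<in> S3" and f: "supp f"
  shows "conj_img f g y = (if y \<in> S3 then f (g * y * inverse g) else 0)"
proof (cases "y \<in> S3")
  case True
  then show ?thesis unfolding conj_img_def using g by (simp add: conj_eq_iff S3_times S3_inverse)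
next
  case False
  have "inverse g * x * g \<noteq> y" if "x \<in> S3" for x using that g False by (metis S3_times S3_inverse)
  then show ?thesis unfolding conj_img_def using False by (auto intro!: sum.neutral)
qed

lemma supp_Lc: "supp w \<Longrightarrow> supp (Lc a b c w)"
  by (simp add: supp_def Lc_def dl_out Cm_out)

lemma supp_conj: "g \<in> S3 \<Longrightarrow> supp f \<Longrightarrow> supp (conj_img f g)"
  by (simp add: supp_def conj_formula)

lemma conj_Lc:
  assumes g: "g \<in> S3" and w: "supp w"
  shows "conj_img (Lc a b c w) g = Lc a b c (conj_img w g)"
proof (rule ext)
  fix y
  show "conj_img (Lc a b c w) g y = Lc a b c (conj_img w g) y"
  proof (cases "y \<in> S3")
    case True
    have e: "g * y * inverse g = 1 \<longleftrightarrow> y = 1"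
      by (metis mult.assoc mult_1_left mult_1_right perm.left_inverse perm.right_inverse inv_cancel)
    have "conj_img (Lc a b c w) g y = Lc a b c w (g*y*inverse g)"
      using conj_formula[OF g supp_Lc[OF w]] True by simp
    then show ?thesis using True g w
      by (simp add: conj_formula Lc_def dl_def delta_id_def e Cm_in S3_times S3_inverse)
  next
    case False
    then show ?thesis using g w conj_formula[OF g supp_Lc[OF w]] by (simp add: conj_formula Lc_def dl_out Cm_out)
  qed
qed

lemma sum_conj:
  assumes g: "g \<in> S3" and w: "supp w"
  shows "sum (conj_img w g) S3 = sum w S3"
proof -
  have "sum (conj_img w g) S3 = (\<Sum>y\<in>S3. w (g * y * inverse g))"
    using g w by (simp add: conj_formula)
  also have "\<dots> = sum w S3"
    by (rule sum.reindex_bij_witness[of _ "\<lambda>x. inverse g * x * g" "\<lambda>y. g * y * inverse g"])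
       (use g in \<open>auto simp: grp S3_times S3_inverse\<close>)
  finally show ?thesis .
qed

lemma conv_conj:
  assumes g: "g \<in> S3" and w: "supp w" and z: "z \<in> S3"
  shows "conv (conj_img w g) (conj_img w g) z = conv w w (g * z * inverse g)"
proof -
  have "conv (conj_img w g) (conj_img w g) z = (\<Sum>x\<in>S3. w (g * x * inverse g) * w (g * (inverse x * z) * inverse g))"
    using g w z by (simp add: conv_in conj_formula S3_times S3_inverse)
  also have "\<dots> = (\<Sum>x\<in>S3. w x * w (inverse x * (g * z * inverse g)))"
    by (rule sum.reindex_bij_witness[of _ "\<lambda>x. inverse g * x * g" "\<lambda>y. g * y * inverse g"])
       (use g in \<open>auto simp: grp S3_times S3_inverse\<close>)
  also have "\<dots> = conv w w (g * z * inverse g)"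
    using g z by (simp add: conv_in S3_times S3_inverse)
  finally show ?thesis .
qed

definition nu :: meas where
  "nu = (\<lambda>z. if z = t12 then -1 else if z = t23 then 1 else if z = c123 then 1 else if z = c132 then -1 else 0)"

lemma supp_nu: "supp nu"
  using six_in_S3 by (auto simp: supp_def nu_def)

lemma sum_nu: "sum nu S3 = 0"
  by (simp add: sum_S3 nu_def S3_eq_iff psimps)

lemma conv_nu: "conv nu nu z = 0"
proof (cases "z \<in> S3")
  case True
  then consider "z = 1" | "z = t12" | "z = t13" | "z = t23" | "z = c123" | "z = c132"
    using S3_cases by blast
  then show ?thesis
    by cases (simp_all add: conv_def sum_S3 nu_def S3_eq_iff psimps)
qed (simp add: conv_out)

lemma class_sum_nu: assumes "y \<in> S3" shows "(\<Sum>g\<in>S3. nu (g * y * inverse g)) = 0"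
proof -
  consider "y = 1" | "y = t12" | "y = t13" | "y = t23" | "y = c123" | "y = c132"
    using S3_cases assms by blast
  then show ?thesis
    by cases (simp_all add: sum_S3 nu_def S3_eq_iff psimps inv_six)
qed

lemma jm_Lc: "jm = Lc (-1) 1 1 nu"
proof (rule ext)
  fix z
  show "jm z = Lc (-1) 1 1 nu z"
  proof (cases "z \<in> S3")
    case True
    then consider "z = 1" | "z = t12" | "z = t13" | "z = t23" | "z = c123" | "z = c132"
      using S3_cases by blast
    then show ?thesis
      by cases (simp_all add: jm_def Lc_def dl_def delta_id_def Cm_in nu_def S3_eq_iff psimps
          flip: t13_def t23_def c123_def)
  next
    case False
    then have "z \<noteq> t13" "z \<noteq> t23" "z \<noteq> c123" using six_in_S3 by auto
    then show ?thesis using False supp_nu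
      by (simp add: jm_def Lc_def dl_out Cm_out supp_def flip: t13_def t23_def c123_def)
  qed
qed

lemma jm0_Lc: "jm0 = Lc (-1) 1 0 nu"
  by (rule ext) (auto simp: jm0_def Lc_def dl_def delta_id_def Cm_def S3_one)

lemma nu_props: "supp nu" "sum nu S3 = 0" "\<And>z. conv nu nu z = 0"
  using supp_nu sum_nu conv_nu by auto

lemma mu_eq: "cpp jm 1 = Lc alpha beta alpha nu"
  using cpp_Lc[OF nu_props, of 1] by (simp add: jm_Lc)

lemma eta_eq: "cpp jm0 1 = Lc alpha beta 0 nu"
  using cpp_Lc[OF nu_props, of 0] by (simp add: jm0_Lc)

lemma ab: "alpha + 6 * beta = 1" "alpha > 0" "beta \<ge> 0"
  by (simp_all add: alpha_def beta_def field_simps)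

lemma nug_props:
  assumes g: "g \<in> S3"
  shows "supp (conj_img nu g)" "sum (conj_img nu g) S3 = 0" "\<And>z. conv (conj_img nu g) (conj_img nu g) z = 0"
proof -
  show "supp (conj_img nu g)" using supp_conj[OF g supp_nu] .
  show "sum (conj_img nu g) S3 = 0" using sum_conj[OF g supp_nu] sum_nu by simp
  fix z show "conv (conj_img nu g) (conj_img nu g) z = 0"
    by (cases "z \<in> S3") (simp_all add: conv_conj[OF g supp_nu] conv_nu conv_out)
qed

theorem lemma8p17:
  shows "quasi_invariant (cpp jm 1) \<and> (\<forall>n. avg_conj (cpp jm 1) n = conv_pow (cpp jm0 1) n)"
proof -
  define A where "A n = alpha ^ n" for n :: nat
  define B where "B n = ((alpha + 6 * beta) ^ n - alpha ^ n) / 6" for n :: nat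
  have eta_pow: "conv_pow (cpp jm0 1) n = Lc (A n) (B n) 0 nu" for n
    unfolding eta_eq conv_pow_Lc[OF nu_props] A_def B_def by simp
  have avg: "avg_conj (cpp jm 1) n = conv_pow (cpp jm0 1) n" for n
  proof (rule ext)
    fix y
    have p: "conv_pow (conj_img (cpp jm 1) g) n = Lc (A n) (B n) (real n * alpha ^ (n - 1) * alpha) (conj_img nu g)"
      if g: "g \<in> S3" for g
      unfolding mu_eq conj_Lc[OF g supp_nu] conv_pow_Lc[OF nug_props[OF g]] A_def B_def ..
    have s: "(\<Sum>g\<in>S3. conj_img nu g y) = 0"
      by (cases "y \<in> S3") (simp_all add: conj_formula supp_nu class_sum_nu)
    have "avg_conj (cpp jm 1) n y = (\<Sum>g\<in>S3. Lc (A n) (B n) (real n * alpha ^ (n - 1) * alpha) (conj_img nu g) y) / 6"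
      unfolding avg_conj_def card_S3 by (simp add: p)
    also have "\<dots> = (6 * (A n * dl y + B n * Cm y) + real n * alpha ^ (n - 1) * alpha * (\<Sum>g\<in>S3. conj_img nu g y)) / 6"
      by (simp add: Lc_def sum.distrib sum_distrib_left[symmetric] card_S3 del: sum_distrib_left)
    also have "\<dots> = Lc (A n) (B n) 0 nu y"
      unfolding s by (simp add: Lc_def)
    finally show "avg_conj (cpp jm 1) n y = conv_pow (cpp jm0 1) n y" by (simp add: eta_pow)
  qed
  have pm: "prob_meas (cpp jm0 1)"
    unfolding prob_meas_def eta_eq
  proof (intro conjI allI impI)
    fix x
    show "0 \<le> Lc alpha beta 0 nu x"
      using ab by (simp add: Lc_def dl_def delta_id_def Cm_def)
  next
    fix x assume "x \<notin> S3"
    then show "Lc alpha beta 0 nu x = 0" by (simp add: Lc_def dl_out Cm_out)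
  next
    show "sum (Lc alpha beta 0 nu) S3 = 1" using ab by (simp add: sum_Lc)
  qed
  show ?thesis
    unfolding quasi_invariant_def using pm avg by auto
qed

end
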